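(* Let $G$ be a finite non-cyclic group. (i) If $\psi'(G)\ge \frac{19}{43}$, then $2$ divides $|G|$. (ii) If $\psi'(G)>\frac{31}{77}$, then $2$ or $3$ divides $|G|$.
   Context: For a finite group $G$, $\psi(G)=\sum_{x\in G} o(x)$ and $\psi'(G)=\psi(G)/\psi(\mathcal{C}_{|G|})$, where $\mathcal{C}_n$ is the cyclic group of order $n$. *)

theory Defs
  imports "HOL-Algebra.Multiplicative_Group" "HOL-Algebra.Elementary_Groups"
begin

definition psi :: "('a, 'b) monoid_scheme \<Rightarrow> nat" where
  "psi G = (\<Sum>x\<in>carrier G. group.ord G x)"

text \<open>psi' G = psi G / psi (C_|G|), with C_n realised as integer_mod_group n.\<close>
definition psi' :: "('a, 'b) monoid_scheme \<Rightarrow> real" where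
  "psi' G = real (psi G) / real (psi (integer_mod_group (order G)))"

end

theory Submission
  imports Defs "HOL-Computational_Algebra.Primes"
begin


definition fsum :: "nat \<Rightarrow> nat" where
  "fsum k = (\<Sum>i<k. k div gcd k i)"

lemma fsum_le_sq: "fsum k \<le> k^2"
proof -
  have "fsum k \<le> (\<Sum>i<k. k)" unfolding fsum_def by (intro sum_mono) auto
  then show ?thesis by (simp add: power2_eq_square)
qed

lemma fsum_1[simp]: "fsum (Suc 0) = 1" by (simp add: fsum_def)

lemma crt_inj:
  fixes a b :: nat
  assumes "coprime a b"
  shows "inj_on (\<lambda>i. (i mod a, i mod b)) {..<a*b}"
proof -
  have key: "x = y" if "y \<le> x" "x < a*b" "x mod a = y mod a" "x mod b = y mod b" for x y :: nat
  proof -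
    have "a dvd x - y" "b dvd x - y" using that by (simp_all add: mod_eq_dvd_iff_nat)
    hence "a*b dvd x - y" using assms by (simp add: divides_mult)
    moreover have "x - y < a*b" using that by linarith
    ultimately have "x - y = 0" using nat_dvd_not_less by blast
    thus ?thesis using that by simp
  qed
  show ?thesis
  proof (rule inj_onI)
    fix x y assume "x \<in> {..<a*b}" "y \<in> {..<a*b}" "(x mod a, x mod b) = (y mod a, y mod b)"
    then show "x = y" using key[of y x] key[of x y] by (cases "y \<le> x") auto
  qed
qed

lemma crt_bij:
  fixes a b :: nat
  assumes "coprime a b" "a > 0" "b > 0"
  shows "bij_betw (\<lambda>i. (i mod a, i mod b)) {..<a*b} ({..<a} \<times> {..<b})"
proof -
  have "(\<lambda>i. (i mod a, i mod b)) ` {..<a*b} \<subseteq> {..<a} \<times> {..<b}" using assms by auto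
  moreover have "card ((\<lambda>i. (i mod a, i mod b)) ` {..<a*b}) = card ({..<a} \<times> {..<b})"
    using card_image[OF crt_inj[OF assms(1)]] by (simp add: card_cartesian_product)
  ultimately have "(\<lambda>i. (i mod a, i mod b)) ` {..<a*b} = {..<a} \<times> {..<b}"
    by (intro card_subset_eq) auto
  thus ?thesis using crt_inj[OF assms(1)] by (simp add: bij_betw_def)
qed

lemma gcd_coprime_mult:
  fixes a b i :: nat
  assumes "coprime a b"
  shows "gcd (a*b) i = gcd a i * gcd b i"
proof (rule dvd_antisym)
  have c: "coprime (gcd a i) (gcd b i)"
    by (rule coprime_divisors[OF _ _ assms]) auto
  show "gcd a i * gcd b i dvd gcd (a*b) i"
    by (intro gcd_greatest divides_mult c mult_dvd_mono) auto
  let ?g = "gcd (a*b) i"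
  have 1: "a * gcd b i = gcd (a*b) (a*i)" by (simp add: gcd_mult_distrib_nat)
  have 2: "i * gcd b i = gcd (i*b) (i*i)" by (simp add: gcd_mult_distrib_nat)
  have "?g dvd a * gcd b i" unfolding 1 by (simp add: dvd_mult2)
  moreover have "?g dvd i * gcd b i" unfolding 2
    by (metis dvd_mult2 gcd_dvd2 gcd_greatest)
  ultimately have "?g dvd gcd (a * gcd b i) (i * gcd b i)" by simp
  also have "\<dots> = gcd a i * gcd b i"
    using gcd_mult_distrib_nat[of "gcd b i" a i] by (simp add: mult.commute)
  finally show "?g dvd gcd a i * gcd b i" .
qed

lemma fsum_mult:
  assumes "coprime a b" "a > 0" "b > 0"
  shows "fsum (a*b) = fsum a * fsum b"
proof -
  define g where "g = (\<lambda>(u::nat,v::nat). (a div gcd a u) * (b div gcd b v))"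
  have tm: "(a*b) div gcd (a*b) i = g (i mod a, i mod b)" for i
  proof -
    have "gcd a i = gcd a (i mod a)" "gcd b i = gcd b (i mod b)"
      by (metis gcd.commute gcd_red_nat)+
    moreover have "(a*b) div (gcd a i * gcd b i) = (a div gcd a i) * (b div gcd b i)"
      by (simp add: div_mult_div_if_dvd)
    ultimately show ?thesis using gcd_coprime_mult[OF assms(1)] by (simp add: g_def)
  qed
  have "fsum (a*b) = (\<Sum>i<a*b. g (i mod a, i mod b))"
    unfolding fsum_def by (simp add: tm)
  also have "\<dots> = (\<Sum>z\<in>{..<a} \<times> {..<b}. g z)"
    using sum.reindex_bij_betw[OF crt_bij[OF assms], of g] by simp
  also have "\<dots> = (\<Sum>u<a. \<Sum>v<b. g (u,v))" unfolding sum.cartesian_product by simp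
  also have "\<dots> = fsum a * fsum b"
    by (simp add: g_def fsum_def sum_product)
  finally show ?thesis .
qed

lemma fsum_prime_power_step:
  assumes p: "prime p"
  shows "fsum (p^Suc b) = fsum (p^b) + (p^Suc b - p^b) * p^Suc b"
proof -
  let ?N = "p^b"
  let ?M = "p^Suc b"
  have pos: "p > 0" using p prime_gt_0_nat by blast
  define A where "A = {i\<in>{..<?M}. p dvd i}"
  define B where "B = {i\<in>{..<?M}. \<not> p dvd i}"
  have AB: "{..<?M} = A \<union> B" "A \<inter> B = {}" unfolding A_def B_def by auto
  have Aimg: "A = (\<lambda>j. p*j) ` {..<?N}"
  proof
    show "A \<subseteq> (\<lambda>j. p*j) ` {..<?N}"
    proof
      fix i assume "i \<in> A"
      then obtain j where j: "i = p*j" "i < p * ?N" unfolding A_def by auto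
      hence "j < ?N" using pos by simp
      thus "i \<in> (\<lambda>j. p*j) ` {..<?N}" using j by auto
    qed
    show "(\<lambda>j. p*j) ` {..<?N} \<subseteq> A" unfolding A_def using pos by auto
  qed
  have injA: "inj_on (\<lambda>j. p*j) {..<?N}" using pos by (auto simp: inj_on_def)
  have "(\<Sum>i\<in>A. ?M div gcd ?M i) = (\<Sum>j<?N. ?M div gcd ?M (p*j))"
    unfolding Aimg by (simp add: sum.reindex[OF injA])
  also have "\<dots> = (\<Sum>j<?N. ?N div gcd ?N j)"
  proof (rule sum.cong[OF refl])
    fix j
    have "gcd ?M (p*j) = p * gcd ?N j" by (simp add: gcd_mult_distrib_nat)
    thus "?M div gcd ?M (p*j) = ?N div gcd ?N j" using pos by simp
  qed
  finally have sA: "(\<Sum>i\<in>A. ?M div gcd ?M i) = fsum ?N" unfolding fsum_def .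
  have "(\<Sum>i\<in>B. ?M div gcd ?M i) = (\<Sum>i\<in>B. ?M)"
  proof (rule sum.cong[OF refl])
    fix i assume "i \<in> B"
    hence "\<not> p dvd i" unfolding B_def by auto
    hence "coprime p i" using p by (simp add: prime_imp_coprime)
    hence "gcd ?M i = 1" by (simp add: coprime_power_left_iff)
    thus "?M div gcd ?M i = ?M" by simp
  qed
  moreover have cA: "card A = ?N" unfolding Aimg using card_image[OF injA] by simp
  moreover have cAB: "card A + card B = ?M"
  proof -
    have "card A + card B = card (A \<union> B)"
      by (rule card_Un_disjoint[symmetric]) (auto simp: A_def B_def)
    thus ?thesis using AB(1)[symmetric] by simp
  qed
  moreover have "card B = ?M - ?N" using cA cAB by linarith
  ultimately have sB: "(\<Sum>i\<in>B. ?M div gcd ?M i) = (?M - ?N) * ?M"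
    by simp
  have "fsum ?M = (\<Sum>i\<in>A. ?M div gcd ?M i) + (\<Sum>i\<in>B. ?M div gcd ?M i)"
    unfolding fsum_def AB(1) by (rule sum.union_disjoint) (auto simp: A_def B_def)
  thus ?thesis using sA sB by simp
qed

lemma fsum_prime_power:
  assumes p: "prime p"
  shows "(p+1) * fsum (p^b) = p^(2*b+1) + 1"
proof (induction b)
  case 0
  then show ?case by simp
next
  case (Suc b)
  obtain s where s: "p = Suc s" using p by (metis not0_implies_Suc not_prime_0)
  define X where "X = p^b * p^b"
  define f where "f = fsum (p^b)"
  have d: "p^Suc b - p^b = s * p^b" using s by (simp add: diff_mult_distrib)
  have e: "fsum (p^Suc b) = f + s * p * X"
    unfolding fsum_prime_power_step[OF p] d f_def X_def by (simp add: algebra_simps)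
  have pw: "p^(2*b+1) = p * X" unfolding X_def by (simp add: mult_2 power_add)
  have pw2: "p^(2*Suc b+1) = p * X * p * p" unfolding X_def by (simp add: mult_2 power_add)
  have ih: "(p+1) * f = p * X + 1" using Suc.IH pw f_def by simp
  have k: "1 + (p+1)*s = p*p" using s by simp
  have "(p+1) * fsum (p^Suc b) = (p+1) * f + p * X * ((p+1)*s)"
    unfolding e by (simp add: algebra_simps)
  also have "\<dots> = p * X * (1 + (p+1)*s) + 1" using ih by (simp add: algebra_simps)
  also have "\<dots> = p^(2*Suc b+1) + 1" unfolding k pw2 by (simp add: algebra_simps)
  finally show ?case .
qed

lemma fsum_pos: "n > 0 \<Longrightarrow> fsum n > 0"
proof -
  assume n: "n > 0"
  have "n div gcd n 0 \<le> fsum n" unfolding fsum_def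
    by (rule member_le_sum) (use n in auto)
  thus ?thesis using n by simp
qed

lemma fsum_prime_power_ge:
  assumes r: "prime r"
  shows "(r*r - r + 1) * fsum (r^b) \<le> fsum (r^Suc b)"
proof -
  have r1: "r \<ge> 1" using r prime_ge_1_nat by blast
  have le: "fsum (r^b) \<le> r^b * r^b" using fsum_le_sq[of "r^b"] by (simp add: power2_eq_square)
  have "(r*r - r) * fsum (r^b) = (r - 1) * r * fsum (r^b)" by (simp add: algebra_simps diff_mult_distrib)
  also have "\<dots> \<le> (r - 1) * r * (r^b * r^b)" using le by simp
  also have "\<dots> = (r^Suc b - r^b) * r^Suc b" by (simp add: algebra_simps diff_mult_distrib)
  finally have "(r*r - r) * fsum (r^b) \<le> (r^Suc b - r^b) * r^Suc b" .
  moreover have "(r*r - r + 1) * fsum (r^b) = (r*r - r) * fsum (r^b) + fsum (r^b)"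
    by (simp add: algebra_simps)
  ultimately show ?thesis unfolding fsum_prime_power_step[OF r] by linarith
qed

lemma fsum_prime_step:
  assumes r: "prime r" and d: "d > 0"
  shows "(r*r - r + 1) * fsum d \<le> fsum (d*r)"
proof -
  define b where "b = multiplicity r d"
  define u where "u = d div r^b"
  have u: "d = r ^ b * u" "\<not> r dvd u"
    using multiplicity_dvd[of r d] multiplicity_decompose[of d r] d r prime_gt_1_nat[OF r] unfolding b_def u_def by simp_all
  have u0: "u > 0" using u d by (cases "u = 0") auto
  have cop: "coprime (r^c) u" for c using u(2) r
    by (simp add: coprime_power_left_iff prime_imp_coprime)
  have rp: "r^c > 0" for c using r prime_gt_0_nat by simp
  have fd: "fsum d = fsum (r^b) * fsum u" unfolding u(1) by (rule fsum_mult[OF cop rp u0])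
  have dr: "d * r = r^Suc b * u" unfolding u(1) by (simp add: algebra_simps)
  have fdr: "fsum (d*r) = fsum (r^Suc b) * fsum u" unfolding dr by (rule fsum_mult[OF cop rp u0])
  have "(r*r - r + 1) * fsum d = ((r*r - r + 1) * fsum (r^b)) * fsum u"
    unfolding fd by (simp add: algebra_simps)
  also have "\<dots> \<le> fsum (r^Suc b) * fsum u"
    using fsum_prime_power_ge[OF r] by (rule mult_right_mono) simp
  also have "\<dots> = fsum (d*r)" using fdr by simp
  finally show ?thesis .
qed
lemma fsum_mono_dvd:
  assumes "d dvd e" "e > 0"
  shows "fsum d \<le> fsum e"
proof -
  obtain t where t: "e = d * t" using assms(1) by blast
  have "\<forall>d. d * t > 0 \<longrightarrow> fsum d \<le> fsum (d * t)"
  proof (induction t rule: less_induct)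
    case (less t)
    show ?case
    proof (intro allI impI)
      fix d assume dt: "d * t > 0"
      show "fsum d \<le> fsum (d * t)"
      proof (cases "t = 1")
        case True thus ?thesis by simp
      next
        case False
        then obtain r where r: "prime r" "r dvd t" using prime_factor_nat by blast
        then obtain t' where t': "t = r * t'" by blast
        have t'pos: "t' > 0" "d > 0" using dt t' by auto
        have "t' < t" using t' r(1) t'pos prime_gt_1_nat by auto
        hence "fsum d \<le> fsum (d * t')" using less.IH t'pos by simp
        also have "\<dots> \<le> (r*r - r + 1) * fsum (d * t')" by (simp add: add_mult_distrib)
        also have "\<dots> \<le> fsum (d * t' * r)" by (rule fsum_prime_step[OF r(1)]) (use t'pos in simp)
        also have "d * t' * r = d * t" using t' by simp
        finally show ?thesis .
      qed
    qed
  qed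
  thus ?thesis using t assms(2) by blast
qed


lemma fsum_lower:
  "n > 0 \<Longrightarrow> (\<forall>r. prime r \<and> r dvd n \<longrightarrow> q \<le> r \<and> r \<le> P) \<Longrightarrow> q \<le> P + 1
   \<Longrightarrow> q * n^2 \<le> (P+1) * fsum n"
proof (induction n arbitrary: P rule: less_induct)
  case (less n)
  show ?case
  proof (cases "n = 1")
    case True thus ?thesis using less.prems(3) by simp
  next
    case False
    define S where "S = {r. prime r \<and> r dvd n}"
    have finS: "finite S" unfolding S_def
      by (rule finite_subset[of _ "{..n}"]) (use less.prems(1) in \<open>auto dest: dvd_imp_le\<close>)
    obtain r0 where "prime r0" "r0 dvd n" using False prime_factor_nat by blast
    hence neS: "S \<noteq> {}" unfolding S_def by blast
    define r where "r = Max S"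
    have rS: "r \<in> S" unfolding r_def using finS neS by (rule Max_in)
    hence r: "prime r" "r dvd n" unfolding S_def by auto
    have rmax: "s \<le> r" if "prime s" "s dvd n" for s
      unfolding r_def using finS that by (intro Max_ge) (auto simp: S_def)
    define b where "b = multiplicity r n"
    define u where "u = n div r^b"
    have u: "n = r ^ b * u" "\<not> r dvd u"
      using multiplicity_dvd[of r n] multiplicity_decompose[of n r] less.prems(1) r prime_gt_1_nat[OF r(1)]
      unfolding b_def u_def by simp_all
    have u0: "u > 0" using u less.prems(1) by (cases "u = 0") auto
    have "r \<noteq> 1" "n \<noteq> 0" using r less.prems(1) by auto
    hence b1: "b \<ge> 1" unfolding b_def using r
      by (simp add: multiplicity_gt_zero_iff Suc_le_eq)
    have r1: "r > 1" using prime_gt_1_nat[OF r(1)] .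
    have rb: "r^b \<ge> r" using power_increasing[OF b1, of r] r1 by simp
    have "u < r * u" using u0 r1 by simp
    also have "r * u \<le> r^b * u" using rb by (rule mult_right_mono) simp
    finally have un: "u < n" using u(1) by simp
    have fac: "\<forall>s. prime s \<and> s dvd u \<longrightarrow> q \<le> s \<and> s \<le> r - 1"
    proof (intro allI impI)
      fix s assume s: "prime s \<and> s dvd u"
      hence sn: "s dvd n" using u(1) by simp
      have "s \<noteq> r" using s u(2) by auto
      thus "q \<le> s \<and> s \<le> r - 1" using less.prems(2) s sn rmax[of s] by auto
    qed
    have qr: "q \<le> r - 1 + 1" using less.prems(2) r r1 by auto
    have IH: "q * u^2 \<le> (r - 1 + 1) * fsum u" by (rule less.IH[OF un u0 fac qr])
    have IH': "q * u^2 \<le> r * fsum u" using IH r1 by simp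
    have cop: "coprime (r^b) u" using u(2) r
      by (simp add: coprime_power_left_iff prime_imp_coprime)
    have fn: "fsum n = fsum (r^b) * fsum u"
      unfolding u(1) by (rule fsum_mult[OF cop]) (use r1 u0 in simp_all)
    have pp: "(r+1) * fsum (r^b) = r^(2*b+1) + 1" by (rule fsum_prime_power[OF r(1)])
    have pp': "r * (r^b)^2 \<le> (r+1) * fsum (r^b)"
      unfolding pp by (simp add: power_mult[symmetric] power_add mult.commute)
    have "r * (q * n^2) = (r * (r^b)^2) * (q * u^2)" unfolding u(1) by (simp add: power_mult_distrib algebra_simps)
    also have "\<dots> \<le> ((r+1) * fsum (r^b)) * (r * fsum u)" using pp' IH' by (rule mult_mono) simp_all
    also have "\<dots> = r * ((r+1) * fsum n)" unfolding fn by (simp add: algebra_simps)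
    finally have "q * n^2 \<le> (r+1) * fsum n" using r1 by simp
    also have "\<dots> \<le> (P+1) * fsum n" using less.prems(2) r by simp
    finally show ?thesis .
  qed
qed


context group begin

lemma gen_eq:
  assumes fin: "finite (carrier G)" and x: "x \<in> carrier G"
  shows "generate G {x} = (\<lambda>i. x [^] i) ` {..<ord x}"
proof -
  have o1: "ord x \<ge> 1" using ord_ge_1[OF fin x] .
  have "generate G {x} = {x [^] k | k. k \<in> (UNIV :: nat set)}"
    using generate_pow_on_finite_carrier[OF fin x] .
  also have "\<dots> = {x[^]k | k. k \<in> {0 .. ord x - 1}}" using ord_elems[OF fin x] .
  also have "{0 .. ord x - 1} = {..<ord x}" using o1 by auto
  finally show ?thesis by auto
qed

lemma gen_inj:
  assumes fin: "finite (carrier G)" and x: "x \<in> carrier G"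
  shows "inj_on (\<lambda>i. x [^] i) {..<ord x}"
proof -
  have o1: "ord x \<ge> 1" using ord_ge_1[OF fin x] .
  have "{0 .. ord x - 1} = {..<ord x}" using o1 by auto
  thus ?thesis using ord_inj[OF x] by simp
qed

lemma card_gen:
  assumes x: "x \<in> carrier G"
  shows "card (generate G {x}) = ord x"
  using generate_pow_card[OF x] by simp

lemma sum_ord_gen:
  assumes fin: "finite (carrier G)" and x: "x \<in> carrier G"
  shows "(\<Sum>y\<in>generate G {x}. ord y) = fsum (ord x)"
proof -
  have "(\<Sum>y\<in>generate G {x}. ord y) = (\<Sum>i<ord x. ord (x [^] i))"
    unfolding gen_eq[OF fin x] by (rule sum.reindex[OF gen_inj[OF fin x], unfolded comp_def])
  also have "\<dots> = (\<Sum>i<ord x. ord x div gcd (ord x) i)"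
    by (rule sum.cong[OF refl]) (use ord_ge_1[OF fin x] in \<open>auto simp: ord_pow_gen[OF x]\<close>)
  finally show ?thesis unfolding fsum_def .
qed

lemma gen_subset:
  assumes x: "x \<in> carrier G"
  shows "generate G {x} \<subseteq> carrier G"
  using generate_incl[of "{x}"] x by blast

lemma cyclic_iff_ord:
  assumes fin: "finite (carrier G)"
  shows "cyclic_group G \<longleftrightarrow> (\<exists>x\<in>carrier G. ord x = order G)"
proof
  assume "cyclic_group G"
  then obtain x where x: "x \<in> carrier G" "subgroup_generated G {x} = G"
    unfolding cyclic_group_def by blast
  hence "carrier G = generate G {x}"
    by (metis carrier_subgroup_generated inf.absorb2 empty_subsetI insert_subset)
  hence "ord x = order G" using card_gen[OF x(1)] unfolding order_def by simp
  thus "\<exists>x\<in>carrier G. ord x = order G" using x by blast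
next
  assume "\<exists>x\<in>carrier G. ord x = order G"
  then obtain x where x: "x \<in> carrier G" "ord x = order G" by blast
  have "generate G {x} = carrier G"
    using card_gen[OF x(1)] x(2) gen_subset[OF x(1)] fin unfolding order_def
    by (intro card_subset_eq) auto
  hence "subgroup_generated G {x} = G"
    unfolding subgroup_generated_def using x(1) by simp
  thus "cyclic_group G" unfolding cyclic_group_def using x(1) by blast
qed

lemma psi_cyclic:
  assumes fin: "finite (carrier G)" and cyc: "cyclic_group G"
  shows "psi G = fsum (order G)"
proof -
  obtain x where x: "x \<in> carrier G" "ord x = order G" using cyc cyclic_iff_ord[OF fin] by blast
  have "generate G {x} = carrier G"
    using card_gen[OF x(1)] x(2) gen_subset[OF x(1)] fin unfolding order_def
    by (intro card_subset_eq) auto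
  thus ?thesis unfolding psi_def using sum_ord_gen[OF fin x(1)] x(2) by simp
qed

end


lemma psi_integer_mod_group:
  assumes n: "n > 0"
  shows "psi (integer_mod_group n) = fsum n"
proof (cases "n = 1")
  case True
  have "carrier (integer_mod_group n) = {0}" using True by (auto simp: carrier_integer_mod_group)
  thus ?thesis using True unfolding psi_def
    by (simp add: group.ord_id[OF group_integer_mod_group, simplified])
next
  case False
  interpret Z: group "integer_mod_group n" by simp
  have fin: "finite (carrier (integer_mod_group n))" using n by (simp add: carrier_integer_mod_group)
  have one: "(1::int) \<in> carrier (integer_mod_group n)" using False by simp
  have "Z.ord 1 = n"
  proof -
    have "(1::int) [^]\<^bsub>integer_mod_group n\<^esub> k = \<one>\<^bsub>integer_mod_group n\<^esub> \<longleftrightarrow> n dvd k" for k :: nat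
      by (simp add: dvd_eq_mod_eq_0 flip: of_nat_mod)
    thus ?thesis using Z.ord_unique[OF one] by blast
  qed
  moreover have "order (integer_mod_group n) = n"
    using n by (simp add: order_def carrier_integer_mod_group)
  ultimately have "cyclic_group (integer_mod_group n)"
    using Z.cyclic_iff_ord[OF fin] one by metis
  thus ?thesis using Z.psi_cyclic[OF fin] \<open>order (integer_mod_group n) = n\<close> by simp
qed

lemma ord_subgroup:
  assumes "group G" "subgroup H G" "x \<in> H"
  shows "group.ord (G\<lparr>carrier := H\<rparr>) x = group.ord G x"
proof -
  interpret G: group G by fact
  interpret K: group "G\<lparr>carrier := H\<rparr>" using subgroup.subgroup_is_group[OF assms(2,1)] .
  have xG: "x \<in> carrier G" using assms subgroup.subset by blast
  have "x [^]\<^bsub>G\<lparr>carrier := H\<rparr>\<^esub> k = \<one>\<^bsub>G\<lparr>carrier := H\<rparr>\<^esub> \<longleftrightarrow> G.ord x dvd k" for k :: nat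
    using G.pow_eq_id[OF xG, of k] G.nat_pow_consistent[of x k H] by simp
  thus ?thesis using K.ord_unique[of x] assms(3) by simp
qed

lemma psi_subgroup:
  assumes "group G" "subgroup H G"
  shows "psi (G\<lparr>carrier := H\<rparr>) = (\<Sum>x\<in>H. group.ord G x)"
  unfolding psi_def using ord_subgroup[OF assms] by simp

lemma ord_iso:
  assumes "group G" "group H" "h \<in> iso G H" "x \<in> carrier G"
  shows "group.ord H (h x) = group.ord G x"
proof -
  interpret G: group G by fact
  interpret H: group H by fact
  interpret hh: group_hom G H h using assms iso_imp_homomorphism
    by (simp add: group_hom_def group_hom_axioms_def iso_def)
  have hx: "h x \<in> carrier H" using assms hh.hom_closed by blast
  have inj: "inj_on h (carrier G)" using assms(3) by (simp add: iso_def bij_betw_def)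
  have "h x [^]\<^bsub>H\<^esub> k = \<one>\<^bsub>H\<^esub> \<longleftrightarrow> G.ord x dvd k" for k :: nat
  proof -
    have "h x [^]\<^bsub>H\<^esub> k = h (x [^]\<^bsub>G\<^esub> k)" using hh.hom_nat_pow assms(4) by simp
    moreover have "h (x [^]\<^bsub>G\<^esub> k) = \<one>\<^bsub>H\<^esub> \<longleftrightarrow> x [^]\<^bsub>G\<^esub> k = \<one>\<^bsub>G\<^esub>"
      using inj assms(4) hh.hom_one by (metis G.nat_pow_closed G.one_closed inj_on_eq_iff)
    ultimately show ?thesis using G.pow_eq_id[OF assms(4)] by simp
  qed
  thus ?thesis using H.ord_unique[OF hx] by blast
qed

lemma psi_iso:
  assumes "group G" "group H" "h \<in> iso G H"
  shows "psi H = psi G"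
proof -
  have bij: "bij_betw h (carrier G) (carrier H)" using assms(3) by (simp add: iso_def)
  have "psi H = (\<Sum>x\<in>carrier G. group.ord H (h x))"
    unfolding psi_def using sum.reindex_bij_betw[OF bij, of "group.ord H"] by simp
  also have "\<dots> = psi G" unfolding psi_def using ord_iso[OF assms] by simp
  finally show ?thesis .
qed

lemma transport_nat:
  assumes G: "group G" and fin: "finite (carrier G)"
  shows "\<exists>H::nat monoid. group H \<and> finite (carrier H) \<and> order H = order G \<and> psi H = psi G
           \<and> (cyclic_group H \<longleftrightarrow> cyclic_group G)"
proof -
  interpret G: group G by fact
  obtain g where g: "bij_betw g (carrier G) {0..<card (carrier G)}"
    using ex_bij_betw_finite_nat[OF fin] by blast
  define N where "N = card (carrier G)"
  define f where "f = the_inv_into (carrier G) g"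
  have fg: "f (g x) = x" if "x \<in> carrier G" for x
    using g that unfolding f_def by (simp add: bij_betw_def the_inv_into_f_f)
  have gf: "g (f a) = a" "f a \<in> carrier G" if "a \<in> {0..<N}" for a
    using g that unfolding f_def N_def
    by (auto simp: bij_betw_def f_the_inv_into_f the_inv_into_into)
  have gin: "g x < N" if "x \<in> carrier G" for x
    using g that unfolding N_def by (auto simp: bij_betw_def)
  define H where "H = \<lparr>carrier = {0..<N}, monoid.mult = (\<lambda>a b. g (f a \<otimes>\<^bsub>G\<^esub> f b)), one = g \<one>\<^bsub>G\<^esub>\<rparr>"
  have mon: "monoid H"
    unfolding H_def
    by (rule monoidI) (auto intro!: gin simp: gf fg G.m_assoc)
  have hom: "g \<in> hom G H"
    unfolding H_def by (rule homI) (auto simp: fg gin)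
  have iso: "g \<in> iso G H" using hom g unfolding iso_def H_def N_def by simp
  have grp: "group H" using G.iso_imp_group[OF is_isoI[OF iso] mon] .
  have "finite (carrier H)" unfolding H_def by simp
  moreover have "order H = order G" unfolding H_def order_def N_def by simp
  moreover have "psi H = psi G" using psi_iso[OF G grp iso] .
  moreover have "cyclic_group H \<longleftrightarrow> cyclic_group G"
    using isomorphic_group_cyclicity[OF is_isoI[OF iso] G grp] by simp
  ultimately show ?thesis using grp by blast
qed


lemma dvd_prime_power_le:
  assumes p: "prime (p::nat)" and d: "d dvd p^a" "d \<noteq> p^a"
  shows "d * p \<le> p^a"
proof -
  obtain i where i: "i \<le> a" "d = p^i" using d(1) p by (auto simp: divides_primepow_nat)
  have "i < a" using i d(2) by (cases "i = a") auto
  hence "p^i * p \<le> p^a"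
    using power_increasing[of "Suc i" a p] prime_ge_1_nat[OF p] by (simp add: mult.commute)
  thus ?thesis using i by simp
qed

context group begin

lemma roots_card:
  assumes fin: "finite (carrier G)" and x: "x \<in> carrier G" and e: "e dvd ord x"
  shows "card {y \<in> generate G {x}. y [^] e = \<one>} \<le> e"
proof -
  let ?N = "ord x"
  have N0: "?N > 0" using ord_ge_1[OF fin x] by simp
  obtain k where k: "?N = e * k" using e by blast
  have e0: "e > 0" using N0 k by (cases "e = 0") auto
  have "{y \<in> generate G {x}. y [^] e = \<one>} \<subseteq> (\<lambda>l. x [^] (k * l)) ` {..<e}"
  proof
    fix y assume y: "y \<in> {y \<in> generate G {x}. y [^] e = \<one>}"
    then obtain i where i: "i < ?N" "y = x [^] i" using gen_eq[OF fin x] by auto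
    have "x [^] (i * e) = \<one>" using y i x by (simp add: nat_pow_pow)
    hence "?N dvd i * e" using pow_eq_id[OF x] by simp
    hence "k * e dvd i * e" using k by (simp add: mult.commute)
    hence "k dvd i" using e0 by simp
    then obtain l where l: "i = k * l" by blast
    have "k * l < k * e" using i(1) k l by (simp add: mult.commute)
    hence "l < e" by simp
    thus "y \<in> (\<lambda>l. x [^] (k * l)) ` {..<e}" using i(2) l by auto
  qed
  hence "card {y \<in> generate G {x}. y [^] e = \<one>} \<le> card ((\<lambda>l. x [^] (k * l)) ` {..<e})"
    by (rule card_mono[rotated]) simp
  also have "\<dots> \<le> e" using card_image_le[of "{..<e}"] by simp
  finally show ?thesis .
qed

lemma conj_pow:
  assumes g: "g \<in> carrier G" and s: "s \<in> carrier G"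
  shows "(g \<otimes> s \<otimes> inv g) [^] (t::nat) = g \<otimes> s [^] t \<otimes> inv g"
proof (induction t)
  case 0 thus ?case using g by simp
next
  case (Suc t)
  have c: "inv g \<otimes> (g \<otimes> w) = w" if "w \<in> carrier G" for w
    using g that by (simp add: m_assoc[symmetric])
  have "(g \<otimes> s \<otimes> inv g) [^] Suc t = (g \<otimes> s [^] t \<otimes> inv g) \<otimes> (g \<otimes> s \<otimes> inv g)"
    using Suc by simp
  also have "\<dots> = g \<otimes> s [^] t \<otimes> (inv g \<otimes> (g \<otimes> (s \<otimes> inv g)))"
    using g s by (simp add: m_assoc)
  also have "\<dots> = g \<otimes> (s [^] t \<otimes> s) \<otimes> inv g" using g s c by (simp add: m_assoc)
  also have "\<dots> = g \<otimes> s [^] Suc t \<otimes> inv g" by simp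
  finally show ?case .
qed

lemma ord_conj:
  assumes g: "g \<in> carrier G" and s: "s \<in> carrier G"
  shows "ord (g \<otimes> s \<otimes> inv g) = ord s"
proof -
  have "(g \<otimes> s \<otimes> inv g) [^] t = \<one> \<longleftrightarrow> ord s dvd t" for t :: nat
  proof -
    have "g \<otimes> s [^] t \<otimes> inv g = \<one> \<longleftrightarrow> s [^] t = \<one>"
      using g s by (simp add: group.inv_solve_right')
    thus ?thesis using conj_pow[OF g s] pow_eq_id[OF s] by simp
  qed
  thus ?thesis using ord_unique[of "g \<otimes> s \<otimes> inv g"] g s by simp
qed

lemma sum_over_rcosets:
  assumes fin: "finite (carrier G)" and P: "subgroup P G"
  shows "(\<Sum>z\<in>carrier G. F z) = (\<Sum>Y\<in>rcosets P. \<Sum>z\<in>Y. F z)"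
proof -
  have "carrier G = \<Union>(rcosets P)" using rcosets_part_G[OF P] by simp
  have fA: "\<forall>A\<in>rcosets P. finite A"
    using fin rcosets_part_G[OF P] by (metis Union_upper finite_subset)
  have dj: "\<forall>A\<in>rcosets P. \<forall>B\<in>rcosets P. A \<noteq> B \<longrightarrow> A \<inter> B = {}"
    using rcos_disjoint[OF P] by (auto simp: disjnt_def pairwise_def)
  have "(\<Sum>z\<in>\<Union>(rcosets P). F z) = (\<Sum>Y\<in>rcosets P. \<Sum>z\<in>Y. F z)"
    using sum.Union_disjoint[OF fA dj, of F] by (simp add: comp_def)
  thus ?thesis using \<open>carrier G = \<Union>(rcosets P)\<close> by simp
qed

lemma rcos_repr:
  assumes P: "subgroup P G" and Y: "Y \<in> rcosets P" and z: "z \<in> Y"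
  shows "P #> z = Y" "z \<in> carrier G"
proof -
  obtain g where g: "g \<in> carrier G" "Y = P #> g" using Y unfolding RCOSETS_def by blast
  show "P #> z = Y" using repr_independence[of z P g] g z P by simp
  show "z \<in> carrier G" using g z P r_coset_subset_G subgroup.subset by blast
qed

end


lemma carrier_Mod: "carrier (G Mod H) = rcosets\<^bsub>G\<^esub> H"
  by (simp add: FactGroup_def)

context normal begin

abbreviation tq where "tq z \<equiv> group.ord (G Mod H) (H #> z)"

lemma Q_group: "group (G Mod H)" by (rule factorgroup_is_group)

lemma coset_in_Q: "z \<in> carrier G \<Longrightarrow> H #> z \<in> carrier (G Mod H)"
  by (simp add: carrier_Mod rcosetsI subset)

lemma coset_eq_H: "w \<in> carrier G \<Longrightarrow> (H #> w = H) \<longleftrightarrow> w \<in> H"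
  using coset_join2[of w H] rcos_self[of w H] subgroup_axioms by auto

lemma quot_pow_in:
  assumes z: "z \<in> carrier G"
  shows "z [^] (u::nat) \<in> H \<longleftrightarrow> tq z dvd u"
proof -
  interpret Q: group "G Mod H" by (rule Q_group)
  have "(H #> z) [^]\<^bsub>G Mod H\<^esub> u = H #> (z [^] u)" using FactGroup_pow[OF z] .
  hence "tq z dvd u \<longleftrightarrow> H #> (z [^] u) = H"
    using Q.pow_eq_id[OF coset_in_Q[OF z], of u] by simp
  thus ?thesis using coset_eq_H[of "z [^] u"] z by simp
qed

lemma order_Q:
  assumes fin: "finite (carrier G)"
  shows "order (G Mod H) * card H = order G"
  using lagrange[OF subgroup_axioms] by (simp add: order_def carrier_Mod)

lemma tq_pos:
  assumes fin: "finite (carrier G)" and z: "z \<in> carrier G"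
  shows "tq z \<ge> 1"
proof -
  interpret Q: group "G Mod H" by (rule Q_group)
  have "finite (carrier (G Mod H))"
    using fin by (simp add: carrier_Mod) (metis finite_Pow_iff finite_subset rcosets_subset_PowG subgroup_axioms)
  thus ?thesis using Q.ord_ge_1 coset_in_Q[OF z] by blast
qed

lemma tq_dvd_order:
  assumes fin: "finite (carrier G)" and z: "z \<in> carrier G"
  shows "tq z dvd order (G Mod H)"
proof -
  interpret Q: group "G Mod H" by (rule Q_group)
  show ?thesis using Q.ord_dvd_group_order coset_in_Q[OF z] by blast
qed

lemma ord_decomp:
  assumes fin: "finite (carrier G)" and z: "z \<in> carrier G"
  shows "z [^] tq z \<in> H" "ord z = tq z * ord (z [^] tq z)"
proof -
  show "z [^] tq z \<in> H" using quot_pow_in[OF z] by simp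
  have "z [^] ord z \<in> H" using z by simp
  hence d: "tq z dvd ord z" using quot_pow_in[OF z] by simp
  have "ord (z [^] tq z) = ord z div tq z"
    using ord_pow[OF z d] tq_pos[OF fin z] by simp
  thus "ord z = tq z * ord (z [^] tq z)" using d by simp
qed

lemma sum_tq:
  assumes fin: "finite (carrier G)"
  shows "(\<Sum>z\<in>carrier G. tq z) = card H * psi (G Mod H)"
proof -
  have "(\<Sum>z\<in>carrier G. tq z) = (\<Sum>Y\<in>rcosets H. \<Sum>z\<in>Y. tq z)"
    by (rule sum_over_rcosets[OF fin subgroup_axioms])
  also have "\<dots> = (\<Sum>Y\<in>rcosets H. card H * group.ord (G Mod H) Y)"
  proof (rule sum.cong[OF refl])
    fix Y assume Y: "Y \<in> rcosets H"
    have "(\<Sum>z\<in>Y. tq z) = (\<Sum>z\<in>Y. group.ord (G Mod H) Y)"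
      using rcos_repr[OF subgroup_axioms Y] by simp
    also have "\<dots> = card Y * group.ord (G Mod H) Y" by simp
    also have "card Y = card H" using card_rcosets_equal[OF Y subset] by simp
    finally show "(\<Sum>z\<in>Y. tq z) = card H * group.ord (G Mod H) Y" .
  qed
  also have "\<dots> = card H * psi (G Mod H)"
    unfolding psi_def carrier_Mod by (simp add: sum_distrib_left)
  finally show ?thesis .
qed

end


context group begin

lemma pow_in_gen:
  assumes x: "x \<in> carrier G"
  shows "x [^] (i::nat) \<in> generate G {x}"
proof -
  have "x [^] i = x [^] (int i)" by (simp add: int_pow_int)
  thus ?thesis using generate_pow[OF x] by blast
qed

lemma subgroup_pow_closed:
  assumes H: "subgroup H G" and w: "w \<in> H"
  shows "w [^] (k::nat) \<in> H"
proof (induction k)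
  case 0 thus ?case using H subgroup.one_closed by simp
next
  case (Suc k) thus ?case using H w subgroup.m_closed by (simp add: nat_pow_Suc)
qed

lemma min_pow_in_subgroup:
  assumes H: "subgroup H G" and s: "s \<in> carrier G" and j0: "j0 > 0" "s [^] j0 \<in> H"
    and least: "\<And>j. 0 < j \<Longrightarrow> j < j0 \<Longrightarrow> s [^] j \<notin> H"
    and si: "s [^] (i::nat) \<in> H"
  shows "j0 dvd i"
proof (rule ccontr)
  assume nd: "\<not> j0 dvd i"
  have "s [^] i = (s [^] j0) [^] (i div j0) \<otimes> s [^] (i mod j0)"
    using s by (simp add: nat_pow_pow nat_pow_mult)
  moreover have "inv w \<otimes> (w \<otimes> v) = v" if "w \<in> carrier G" "v \<in> carrier G" for w v
    using that by (simp add: m_assoc[symmetric])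
  ultimately have e: "s [^] (i mod j0) = inv ((s [^] j0) [^] (i div j0)) \<otimes> s [^] i"
    using s by simp
  have "(s [^] j0) [^] (i div j0) \<in> H" by (rule subgroup_pow_closed[OF H j0(2)])
  hence "s [^] (i mod j0) \<in> H" using e si H
    by (simp add: subgroup.m_closed subgroup.m_inv_closed)
  moreover have "0 < i mod j0" "i mod j0 < j0" using nd j0(1) by (auto simp: dvd_eq_mod_eq_0)
  ultimately show False using least by blast
qed

lemma caseB_index:
  assumes fin: "finite (carrier G)" and p: "prime p" and n: "order G = p^a * m" and pm: "\<not> p dvd m"
    and x: "x \<in> carrier G" and k: "ord x * k = order G" and kp: "k < p"
  shows "\<exists>y\<in>carrier G. ord y = p^a \<and> (\<forall>g\<in>carrier G. g \<otimes> y \<otimes> inv g \<in> generate G {y})"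
proof -
  let ?N = "ord x"
  let ?H = "generate G {x}"
  have n0: "order G > 0" using fin order_gt_0_iff_finite by blast
  have k0: "k > 0" using k n0 by (cases "k = 0") auto
  have pk: "\<not> p dvd k" using k0 kp by (auto dest: dvd_imp_le)
  have cop: "coprime (p^a) k" using pk p by (simp add: coprime_power_left_iff prime_imp_coprime)
  have "p^a dvd ?N * k" using k n by simp
  hence pN: "p^a dvd ?N" using cop by (simp add: coprime_dvd_mult_left_iff)
  define d where "d = ?N div p^a"
  have N0: "?N > 0" using ord_ge_1[OF fin x] by simp
  have Nd: "?N = d * p^a" using pN unfolding d_def by simp
  have d0: "d > 0" using Nd N0 by (cases "d = 0") auto
  define s where "s = x [^] d"
  have sG: "s \<in> carrier G" unfolding s_def using x by simp
  have ords: "ord s = p^a"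
    unfolding s_def using ord_pow[OF x _ ] Nd d0 by simp
  have Hsub: "subgroup ?H G" using generate_is_subgroup x by simp
  have sH: "s \<in> ?H" unfolding s_def by (rule pow_in_gen[OF x])
  define E where "E = {y \<in> ?H. y [^] (p^a) = \<one>}"
  have cardE: "card E \<le> p^a" unfolding E_def using roots_card[OF fin x pN] .
  have finE: "finite E" unfolding E_def using fin gen_subset[OF x] by (metis (no_types, lifting) finite_subset mem_Collect_eq subsetI)
  have gsE: "generate G {s} \<subseteq> E"
  proof
    fix w assume w: "w \<in> generate G {s}"
    then obtain i where i: "i < ord s" "w = s [^] i" using gen_eq[OF fin sG] by auto
    have "w \<in> ?H" using generate_subgroup_incl[of "{s}" ?H] sH Hsub w by blast
    moreover have "w [^] (p^a) = \<one>" using i(2) sG ords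
      by (metis nat_pow_one nat_pow_pow mult.commute pow_ord_eq_1)
    ultimately show "w \<in> E" unfolding E_def by simp
  qed
  have gsE_eq: "generate G {s} = E"
    using card_subset_eq[OF finE gsE] card_gen[OF sG] ords cardE
    by (metis antisym card_mono finE gsE)
  have conjH: "g \<otimes> s \<otimes> inv g \<in> ?H" if g: "g \<in> carrier G" for g
  proof -
    let ?s' = "g \<otimes> s \<otimes> inv g"
    have s'G: "?s' \<in> carrier G" using g sG by simp
    have ords': "ord ?s' = p^a" using ord_conj[OF g sG] ords by simp
    define J where "J = {j::nat. 0 < j \<and> ?s' [^] j \<in> ?H}"
    have "?s' [^] (p^a) = \<one>" using ords' s'G pow_ord_eq_1 by metis
    hence paJ: "p^a \<in> J" unfolding J_def using Hsub subgroup.one_closed p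
      by (simp add: prime_gt_0_nat)
    define j0 where "j0 = (LEAST j. j \<in> J)"
    have j0J: "j0 \<in> J" unfolding j0_def using paJ by (rule LeastI)
    have j0le: "j0 \<le> p^a" unfolding j0_def using paJ by (rule Least_le)
    have least: "?s' [^] j \<notin> ?H" if "0 < j" "j < j0" for j
    proof
      assume "?s' [^] j \<in> ?H"
      hence "j \<in> J" using that unfolding J_def by simp
      hence "j0 \<le> j" unfolding j0_def by (rule Least_le)
      thus False using that by simp
    qed
    have j0pos: "0 < j0" "?s' [^] j0 \<in> ?H" using j0J unfolding J_def by auto
    have dvdj: "j0 dvd p^a"
      using min_pow_in_subgroup[OF Hsub s'G j0pos least] paJ unfolding J_def by blast
    have inj: "inj_on (\<lambda>i. ?H #> (?s' [^] i)) {..<j0}"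
    proof (rule inj_onI, rule ccontr)
      fix i i' assume i: "i \<in> {..<j0}" "i' \<in> {..<j0}" and eq: "?H #> (?s' [^] i) = ?H #> (?s' [^] i')"
        and ne: "i \<noteq> i'"
      have gen: False if "i1 < i2" "i2 < j0" "?H #> (?s' [^] i1) = ?H #> (?s' [^] i2)" for i1 i2
      proof -
        have "?s' [^] i2 \<in> ?H #> (?s' [^] i1)" using that(3) rcos_self[of "?s' [^] i2" ?H] Hsub s'G by simp
        hence "?s' [^] i2 \<otimes> inv (?s' [^] i1) \<in> ?H"
          using subgroup.rcos_module_imp[OF Hsub is_group] s'G by simp
        moreover have "?s' [^] i2 \<otimes> inv (?s' [^] i1) = ?s' [^] (i2 - i1)"
        proof -
          have "?s' [^] i2 = ?s' [^] (i2 - i1) \<otimes> ?s' [^] i1"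
            using that(1) s'G by (simp add: nat_pow_mult)
          thus ?thesis using s'G by (simp add: m_assoc)
        qed
        ultimately have "?s' [^] (i2 - i1) \<in> ?H" by simp
        thus False using least[of "i2 - i1"] that by simp
      qed
      show False
      proof (cases "i < i'")
        case True thus False using gen[of i i'] i eq by simp
      next
        case False hence "i' < i" using ne by simp
        thus False using gen[of i' i] i eq by simp
      qed
    qed
    have img: "(\<lambda>i. ?H #> (?s' [^] i)) ` {..<j0} \<subseteq> rcosets ?H"
      using s'G gen_subset[OF x] by (auto intro: rcosetsI)
    have "card (rcosets ?H) * ?N = order G"
      using lagrange[OF Hsub] card_gen[OF x] by simp
    hence crc: "card (rcosets ?H) = k" using k N0 by (metis mult.commute mult_right_cancel not_gr0)
    have finR: "finite (rcosets ?H)" using crc k0 card_ge_0_finite by blast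
    have "j0 = card ((\<lambda>i. ?H #> (?s' [^] i)) ` {..<j0})" using card_image[OF inj] by simp
    also have "\<dots> \<le> card (rcosets ?H)" using card_mono[OF finR img] .
    finally have "j0 \<le> k" using crc by simp
    hence "j0 < p" using kp by simp
    hence "j0 = 1"
    proof -
      obtain i where "j0 = p^i" using dvdj p by (auto simp: divides_primepow_nat)
      moreover assume "j0 < p"
      ultimately show "j0 = 1" using p
        by (metis One_nat_def less_not_refl2 not_less power_0 power_one_right power_increasing prime_ge_1_nat neq0_conv linorder_neqE_nat less_one)
    qed
    thus ?thesis using j0pos s'G by simp
  qed
  show ?thesis
  proof (intro bexI conjI ballI)
    show "s \<in> carrier G" using sG .
    show "ord s = p^a" using ords .
    fix g assume g: "g \<in> carrier G"
    have "(g \<otimes> s \<otimes> inv g) [^] (p^a) = \<one>"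
      using ord_conj[OF g sG] ords g sG by (metis m_closed inv_closed pow_ord_eq_1)
    hence "g \<otimes> s \<otimes> inv g \<in> E" unfolding E_def using conjH[OF g] by simp
    thus "g \<otimes> s \<otimes> inv g \<in> generate G {s}" using gsE_eq by simp
  qed
qed

end


context group begin

lemma conj_closed_normal:
  assumes fin: "finite (carrier G)" and y: "y \<in> carrier G"
    and conj: "\<forall>g\<in>carrier G. g \<otimes> y \<otimes> inv g \<in> generate G {y}"
  shows "generate G {y} \<lhd> G"
proof -
  have sub: "subgroup (generate G {y}) G" using generate_is_subgroup y by simp
  have "g \<otimes> h \<otimes> inv g \<in> generate G {y}" if g: "g \<in> carrier G" and h: "h \<in> generate G {y}" for g h
  proof -
    obtain i where i: "h = y [^] (i::nat)" using h gen_eq[OF fin y] by auto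
    have "g \<otimes> h \<otimes> inv g = (g \<otimes> y \<otimes> inv g) [^] i" using conj_pow[OF g y] i by simp
    thus ?thesis using subgroup_pow_closed[OF sub] conj g by simp
  qed
  thus ?thesis using normal_inv_iff sub by blast
qed

lemma gen_pow_power:
  assumes fin: "finite (carrier G)" and y: "y \<in> carrier G" and w: "w \<in> generate G {y}"
  shows "w [^] ord y = \<one>"
proof -
  obtain i where i: "w = y [^] (i::nat)" using w gen_eq[OF fin y] by auto
  thus ?thesis using y by (metis nat_pow_one nat_pow_pow mult.commute pow_ord_eq_1)
qed

lemma gen_commute:
  assumes fin: "finite (carrier G)" and y: "y \<in> carrier G" and w: "w \<in> generate G {y}"
    and g: "g \<in> carrier G" and c: "g \<otimes> y = y \<otimes> g"
  shows "g \<otimes> w = w \<otimes> g"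
proof -
  obtain i where i: "w = y [^] (i::nat)" using w gen_eq[OF fin y] by auto
  thus ?thesis using group_commutes_pow[of y g i] c g y by simp
qed

end


context group begin

lemma central_coset:
  assumes fin: "finite (carrier G)" and p: "prime p" and n: "order G = p^a * m" and pm: "\<not> p dvd m"
    and y: "y \<in> carrier G" and oy: "ord y = p^a"
    and cen: "\<forall>g\<in>carrier G. g \<otimes> y = y \<otimes> g"
    and nP: "generate G {y} \<lhd> G"
    and Y: "Y \<in> rcosets (generate G {y})"
  shows "inj_on (\<lambda>z. z [^] group.ord (G Mod generate G {y}) Y) Y"
        "(\<lambda>z. z [^] group.ord (G Mod generate G {y}) Y) ` Y = generate G {y}"
proof -
  let ?P = "generate G {y}"
  interpret N: normal ?P G by (rule nP)
  let ?T = "group.ord (G Mod ?P) Y"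
  have Psub: "subgroup ?P G" by (rule N.subgroup_axioms)
  have cardP: "card ?P = p^a" using card_gen[OF y] oy by simp
  have pa0: "p^a > 0" using p prime_gt_0_nat by simp
  have oQ: "order (G Mod ?P) = m" using N.order_Q[OF fin] n cardP pa0
    by (metis mult.commute mult_right_cancel not_gr0)
  obtain g where g: "g \<in> carrier G" "Y = ?P #> g" using Y unfolding RCOSETS_def by blast
  have Tg: "N.tq g = ?T" using g by simp
  have Tm: "?T dvd m" using N.tq_dvd_order[OF fin g(1)] oQ Tg by simp
  have copT: "coprime ?T (p^a)"
  proof -
    have "coprime p m" using pm p by (simp add: prime_imp_coprime)
    hence "coprime m (p^a)" by (simp add: coprime_power_right_iff coprime_commute)
    thus ?thesis using Tm coprime_imp_coprime by (meson coprime_divisors dvd_refl)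
  qed
  have zY: "?P #> z = Y" "z \<in> carrier G" if "z \<in> Y" for z using rcos_repr[OF Psub Y that] by auto
  have mapsto: "z [^] ?T \<in> ?P" if "z \<in> Y" for z
    using N.ord_decomp(1)[OF fin zY(2)[OF that]] zY(1)[OF that] by simp
  show inj: "inj_on (\<lambda>z. z [^] ?T) Y"
  proof (rule inj_onI)
    fix z1 z2 assume z1: "z1 \<in> Y" and z2: "z2 \<in> Y" and eq: "z1 [^] ?T = z2 [^] ?T"
    have z1G: "z1 \<in> carrier G" and z2G: "z2 \<in> carrier G" using zY z1 z2 by auto
    have "z1 \<in> ?P #> z2" using z1 zY(1)[OF z2] by simp
    hence wP: "z1 \<otimes> inv z2 \<in> ?P" using N.rcos_module_imp[OF is_group z2G] by simp
    define w where "w = z1 \<otimes> inv z2"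
    have wG: "w \<in> carrier G" unfolding w_def using z1G z2G by simp
    have z1w: "z1 = w \<otimes> z2" unfolding w_def using z1G z2G by (simp add: m_assoc)
    have wc: "w \<otimes> z2 = z2 \<otimes> w"
      using gen_commute[OF fin y wP[folded w_def] z2G] cen z2G by simp
    have "z1 [^] ?T = w [^] ?T \<otimes> z2 [^] ?T" using z1w pow_mult_distrib[OF wc wG z2G] by simp
    hence "w [^] ?T \<otimes> z2 [^] ?T = \<one> \<otimes> z2 [^] ?T" using eq z2G by simp
    hence wT: "w [^] ?T = \<one>" using wG z2G by (meson nat_pow_closed one_closed right_cancel)
    have d1: "ord w dvd ?T" using wT pow_eq_id[OF wG] by simp
    have d2: "ord w dvd p^a" using gen_pow_power[OF fin y wP[folded w_def]] oy pow_eq_id[OF wG] by simp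
    have "ord w = 1" using d1 d2 copT by (metis coprime_common_divisor_nat coprime_commute nat_dvd_1_iff_1)
    hence "w = \<one>" using ord_eq_1[OF wG] by simp
    thus "z1 = z2" using z1w z2G by simp
  qed
  have sub: "(\<lambda>z. z [^] ?T) ` Y \<subseteq> ?P" using mapsto by auto
  have cY: "card Y = card ?P" using card_rcosets_equal[OF Y N.subset] by simp
  have finP: "finite ?P" using fin gen_subset[OF y] finite_subset by blast
  show "(\<lambda>z. z [^] ?T) ` Y = ?P"
    using card_subset_eq[OF finP sub] card_image[OF inj] cY by simp
qed

end


context group begin

lemma central_case:
  assumes fin: "finite (carrier G)" and p: "prime p" and n: "order G = p^a * m" and pm: "\<not> p dvd m"
    and y: "y \<in> carrier G" and oy: "ord y = p^a"
    and cen: "\<forall>g\<in>carrier G. g \<otimes> y = y \<otimes> g"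
    and nP: "generate G {y} \<lhd> G"
  shows "psi G = fsum (p^a) * psi (G Mod generate G {y})"
        "cyclic_group (G Mod generate G {y}) \<Longrightarrow> cyclic_group G"
        "order (G Mod generate G {y}) = m"
proof -
  let ?P = "generate G {y}"
  interpret N: normal ?P G by (rule nP)
  interpret Q: group "G Mod ?P" by (rule N.Q_group)
  have Psub: "subgroup ?P G" by (rule N.subgroup_axioms)
  have cardP: "card ?P = p^a" using card_gen[OF y] oy by simp
  have pa0: "p^a > 0" using p prime_gt_0_nat by simp
  show oQ: "order (G Mod ?P) = m" using N.order_Q[OF fin] n cardP pa0
    by (metis mult.commute mult_right_cancel not_gr0)
  note cc = central_coset[OF fin p n pm y oy cen nP]
  have zY: "?P #> z = Y" "z \<in> carrier G" if "Y \<in> rcosets ?P" "z \<in> Y" for Y z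
    using rcos_repr[OF Psub that] by auto
  have cos: "(\<Sum>z\<in>Y. ord z) = Q.ord Y * fsum (p^a)" if Y: "Y \<in> rcosets ?P" for Y
  proof -
    have "(\<Sum>z\<in>Y. ord z) = (\<Sum>z\<in>Y. Q.ord Y * ord (z [^] Q.ord Y))"
    proof (rule sum.cong[OF refl])
      fix z assume z: "z \<in> Y"
      show "ord z = Q.ord Y * ord (z [^] Q.ord Y)"
        using N.ord_decomp(2)[OF fin zY(2)[OF Y z]] zY(1)[OF Y z] by simp
    qed
    also have "\<dots> = Q.ord Y * (\<Sum>z\<in>Y. ord (z [^] Q.ord Y))" by (simp add: sum_distrib_left)
    also have "(\<Sum>z\<in>Y. ord (z [^] Q.ord Y)) = (\<Sum>w\<in>?P. ord w)"
      using sum.reindex[OF cc(1)[OF Y], of ord] cc(2)[OF Y] by (simp add: comp_def)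
    also have "\<dots> = fsum (p^a)" using sum_ord_gen[OF fin y] oy by simp
    finally show ?thesis .
  qed
  have "psi G = (\<Sum>Y\<in>rcosets ?P. \<Sum>z\<in>Y. ord z)"
    unfolding psi_def by (rule sum_over_rcosets[OF fin Psub])
  also have "\<dots> = (\<Sum>Y\<in>rcosets ?P. Q.ord Y * fsum (p^a))" using cos by simp
  also have "\<dots> = fsum (p^a) * psi (G Mod ?P)"
    unfolding psi_def carrier_Mod by (simp add: sum_distrib_left mult.commute)
  finally show "psi G = fsum (p^a) * psi (G Mod ?P)" .
  assume cyc: "cyclic_group (G Mod ?P)"
  have finQ: "finite (carrier (G Mod ?P))"
    using oQ pa0 n fin by (metis order_gt_0_iff_finite mult_pos_pos order_def card_ge_0_finite gr0I mult_0_right)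
  obtain Y where Y: "Y \<in> carrier (G Mod ?P)" "Q.ord Y = m" using Q.cyclic_iff_ord[OF finQ] cyc oQ by auto
  have YR: "Y \<in> rcosets ?P" using Y(1) by (simp add: carrier_Mod)
  have "y \<in> ?P" using y generate.incl by fastforce
  then obtain z where z: "z \<in> Y" "z [^] m = y" using cc(2)[OF YR] Y(2) by (metis imageE)
  have "ord z = m * ord y"
    using N.ord_decomp(2)[OF fin zY(2)[OF YR z(1)]] zY(1)[OF YR z(1)] Y(2) z(2) by simp
  hence "ord z = order G" using oy n by simp
  thus "cyclic_group G" using cyclic_iff_ord[OF fin] zY(2)[OF YR z(1)] by blast
qed

end


context group begin

lemma centralizer_subgroup:
  assumes y: "y \<in> carrier G"
  shows "subgroup {g \<in> carrier G. g \<otimes> y = y \<otimes> g} G"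
proof (rule subgroupI)
  show "{g \<in> carrier G. g \<otimes> y = y \<otimes> g} \<subseteq> carrier G" by blast
  show "{g \<in> carrier G. g \<otimes> y = y \<otimes> g} \<noteq> {}" using y by auto
next
  fix a assume a: "a \<in> {g \<in> carrier G. g \<otimes> y = y \<otimes> g}"
  hence aG: "a \<in> carrier G" and c: "a \<otimes> y = y \<otimes> a" by auto
  have "inv a \<otimes> y = inv a \<otimes> y \<otimes> (a \<otimes> inv a)" using aG y by simp
  also have "\<dots> = inv a \<otimes> (y \<otimes> a) \<otimes> inv a" using aG y by (simp add: m_assoc)
  also have "\<dots> = inv a \<otimes> (a \<otimes> y) \<otimes> inv a" using c by simp
  also have "\<dots> = y \<otimes> inv a" using aG y by (simp add: m_assoc[symmetric])
  finally show "inv a \<in> {g \<in> carrier G. g \<otimes> y = y \<otimes> g}" using aG by simp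
next
  fix a b assume a: "a \<in> {g \<in> carrier G. g \<otimes> y = y \<otimes> g}" and b: "b \<in> {g \<in> carrier G. g \<otimes> y = y \<otimes> g}"
  hence aG: "a \<in> carrier G" and ca: "a \<otimes> y = y \<otimes> a" and bG: "b \<in> carrier G" and cb: "b \<otimes> y = y \<otimes> b" by auto
  have "a \<otimes> b \<otimes> y = a \<otimes> (b \<otimes> y)" using aG bG y by (simp add: m_assoc)
  also have "\<dots> = a \<otimes> y \<otimes> b" using cb aG bG y by (simp add: m_assoc)
  also have "\<dots> = y \<otimes> (a \<otimes> b)" using ca aG bG y by (simp add: m_assoc)
  finally show "a \<otimes> b \<in> {g \<in> carrier G. g \<otimes> y = y \<otimes> g}" using aG bG by simp
qed

lemma noncentral_case:
  assumes fin: "finite (carrier G)" and p: "prime p" and n: "order G = p^a * m" and pm: "\<not> p dvd m"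
    and y: "y \<in> carrier G" and oy: "ord y = p^a"
    and nP: "generate G {y} \<lhd> G"
  defines "C \<equiv> {g \<in> carrier G. g \<otimes> y = y \<otimes> g}"
  shows "p * psi G \<le> p * psi (G\<lparr>carrier := C\<rparr>) + p^a * p^a * psi (G Mod generate G {y})"
proof -
  let ?P = "generate G {y}"
  interpret N: normal ?P G by (rule nP)
  have Csub: "subgroup C G" unfolding C_def by (rule centralizer_subgroup[OF y])
  have CG: "C \<subseteq> carrier G" unfolding C_def by auto
  have cardP: "card ?P = p^a" using card_gen[OF y] oy by simp
  have finP: "finite ?P" using fin gen_subset[OF y] finite_subset by blast
  have out: "ord z * p \<le> p^a * N.tq z" if z: "z \<in> carrier G - C" for z
  proof -
    have zG: "z \<in> carrier G" using z by simp
    let ?w = "z [^] N.tq z"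
    have wP: "?w \<in> ?P" using N.ord_decomp(1)[OF fin zG] .
    have wG: "?w \<in> carrier G" using zG by simp
    have d: "ord ?w dvd p^a" using gen_pow_power[OF fin y wP] oy pow_eq_id[OF wG] by simp
    have ne: "ord ?w \<noteq> p^a"
    proof
      assume e: "ord ?w = p^a"
      have "generate G {?w} \<subseteq> ?P"
        using generate_subgroup_incl[of "{?w}" ?P] wP N.subgroup_axioms by simp
      hence "generate G {?w} = ?P" using card_subset_eq[OF finP] card_gen[OF wG] e cardP by simp
      hence "y \<in> generate G {?w}" using generate.incl[of y "{y}" G] by simp
      then obtain i where i: "y = ?w [^] (i::nat)" using gen_eq[OF fin wG] by auto
      hence "y = z [^] (N.tq z * i)" using zG by (simp add: nat_pow_pow)
      moreover have "z [^] (1::nat) \<otimes> z [^] (N.tq z * i) = z [^] (N.tq z * i) \<otimes> z [^] (1::nat)"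
        by (rule nat_pow_comm[OF zG])
      ultimately have "z \<otimes> y = y \<otimes> z" using zG by simp
      thus False using z unfolding C_def by simp
    qed
    have "ord ?w * p \<le> p^a" by (rule dvd_prime_power_le[OF p d ne])
    hence "N.tq z * (ord ?w * p) \<le> N.tq z * p^a" by simp
    thus ?thesis using N.ord_decomp(2)[OF fin zG] by (simp add: algebra_simps)
  qed
  have splitG: "carrier G = C \<union> (carrier G - C)" using CG by auto
  have "psi G = (\<Sum>z\<in>C. ord z) + (\<Sum>z\<in>carrier G - C. ord z)"
    unfolding psi_def by (subst splitG) (rule sum.union_disjoint, use fin CG finite_subset in auto)
  hence "p * psi G = p * (\<Sum>z\<in>C. ord z) + (\<Sum>z\<in>carrier G - C. ord z * p)"
    by (simp add: algebra_simps sum_distrib_left sum_distrib_right)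
  also have "(\<Sum>z\<in>carrier G - C. ord z * p) \<le> (\<Sum>z\<in>carrier G - C. p^a * N.tq z)"
    by (rule sum_mono) (rule out)
  also have "\<dots> \<le> (\<Sum>z\<in>carrier G. p^a * N.tq z)"
    by (rule sum_mono2) (use fin in auto)
  also have "\<dots> = p^a * (p^a * psi (G Mod ?P))"
    using N.sum_tq[OF fin] cardP by (simp add: sum_distrib_left[symmetric])
  also have "(\<Sum>z\<in>C. ord z) = psi (G\<lparr>carrier := C\<rparr>)"
    using psi_subgroup[OF is_group Csub] by simp
  finally show ?thesis by (simp add: algebra_simps)
qed

end


context group begin

lemma noncyclic_ord_bound:
  assumes fin: "finite (carrier G)" and p: "prime p" and n: "order G = p^a"
    and nc: "\<not> cyclic_group G" and x: "x \<in> carrier G"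
  shows "ord x * p \<le> p^a"
proof -
  have "ord x dvd p^a" using ord_dvd_group_order[OF x] n by simp
  moreover have "ord x \<noteq> p^a" using nc cyclic_iff_ord[OF fin] x n by auto
  ultimately show ?thesis by (rule dvd_prime_power_le[OF p])
qed

lemma three_group_bound:
  assumes fin: "finite (carrier G)" and n: "order G = 3^a" and nc: "\<not> cyclic_group G"
  shows "25 * psi G \<le> 11 * fsum (3^a)"
proof -
  have p3: "prime (3::nat)" by simp
  have a0: "a \<noteq> 0"
  proof
    assume "a = 0"
    hence "order G = 1" using n by simp
    hence "ord \<one> = order G" by simp
    thus False using nc cyclic_iff_ord[OF fin] by blast
  qed
  then obtain b where b: "a = Suc b" by (cases a) auto
  define X where "X = (3::nat)^b * 3^b"
  define Y where "Y = fsum (3^b)"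
  have F: "fsum (3^a) = Y + 6 * X"
    unfolding b Y_def X_def fsum_prime_power_step[OF p3] by (simp add: algebra_simps)
  have e3: "(3::nat)^(2*b+1) = 3 * X" unfolding X_def by (simp add: mult_2 power_add)
  have Yf: "4 * Y = 3 * X + 1"
    using fsum_prime_power[OF p3, of b] unfolding Y_def e3 by simp
  have X1: "X \<ge> 1" unfolding X_def by simp
  have bnd: "ord z * 3 \<le> 3^a" if "z \<in> carrier G" for z
    using noncyclic_ord_bound[OF fin p3 n nc that] .
  show ?thesis
  proof (cases "\<exists>x\<in>carrier G. ord x = 3^b")
    case True
    then obtain x where x: "x \<in> carrier G" "ord x = 3^b" by blast
    let ?H = "generate G {x}"
    have HG: "?H \<subseteq> carrier G" by (rule gen_subset[OF x(1)])
    have finH: "finite ?H" using fin HG finite_subset by blast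
    have cH: "card ?H = 3^b" using card_gen[OF x(1)] x(2) by simp
    have "psi G = (\<Sum>z\<in>?H. ord z) + (\<Sum>z\<in>carrier G - ?H. ord z)"
      unfolding psi_def using sum.subset_diff[OF HG fin, of ord] by (simp add: add.commute)
    also have "(\<Sum>z\<in>?H. ord z) = Y" using sum_ord_gen[OF fin x(1)] x(2) Y_def by simp
    also have "(\<Sum>z\<in>carrier G - ?H. ord z) \<le> (\<Sum>z\<in>carrier G - ?H. 3^b)"
      by (rule sum_mono) (use bnd b in auto)
    also have "\<dots> = (3^a - 3^b) * 3^b"
      using card_Diff_subset[OF finH HG] cH n unfolding order_def by simp
    also have "(3::nat)^a - 3^b = 2 * 3^b" unfolding b by simp
    finally have "psi G \<le> Y + 2 * X" unfolding X_def by (simp add: algebra_simps)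
    hence "25 * psi G \<le> 25 * Y + 50 * X" by simp
    moreover have "25 * Y + 50 * X \<le> 11 * Y + 66 * X" using Yf X1 by linarith
    moreover have "11 * (Y + 6 * X) = 11 * Y + 66 * X" by simp
    ultimately show ?thesis unfolding F by linarith
  next
    case False
    have bnd2: "ord z * 3 \<le> 3^b" if z: "z \<in> carrier G" for z
    proof -
      have "ord z dvd 3^a" using ord_dvd_group_order[OF z] n by simp
      then obtain i where i: "i \<le> a" "ord z = 3^i" by (auto simp: divides_primepow_nat)
      have "i \<noteq> a"
      proof
        assume "i = a"
        hence "3^a * 3 \<le> (3::nat)^a" using bnd[OF z] i by simp
        thus False by simp
      qed
      moreover have "i \<noteq> b" using False z i by auto
      ultimately have "Suc i \<le> b" using i b by auto
      hence "3^Suc i \<le> (3::nat)^b" by (rule power_increasing) simp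
      thus ?thesis using i by (simp add: mult.commute)
    qed
    have "3 * psi G = (\<Sum>z\<in>carrier G. ord z * 3)" unfolding psi_def sum_distrib_right[symmetric] by simp
    also have "\<dots> \<le> (\<Sum>z\<in>carrier G. 3^b)" by (rule sum_mono) (rule bnd2)
    also have "\<dots> = 3^a * 3^b" using n unfolding order_def by simp
    also have "\<dots> = 3 * X" unfolding b X_def by simp
    finally have "psi G \<le> X" by simp
    moreover have "11 * (Y + 6 * X) = 11 * Y + 66 * X" by simp
    ultimately show ?thesis unfolding F by linarith
  qed
qed

end


definition primes_ge :: "nat \<Rightarrow> nat \<Rightarrow> bool" where
  "primes_ge q n \<longleftrightarrow> (\<forall>r. prime r \<and> r dvd n \<longrightarrow> q \<le> r)"

definition good :: "real \<Rightarrow> ('a, 'b) monoid_scheme \<Rightarrow> bool" where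
  "good c H \<longleftrightarrow> psi H \<le> fsum (order H) \<and>
     (\<not> cyclic_group H \<longrightarrow> real (psi H) \<le> c * real (fsum (order H)))"

lemma primes_ge_dvd: "primes_ge q n \<Longrightarrow> d dvd n \<Longrightarrow> primes_ge q d"
  unfolding primes_ge_def using dvd_trans by blast

lemma good_of_IH:
  assumes IH: "\<forall>H::nat monoid. group H \<and> finite (carrier H) \<and> order H < N \<and> primes_ge q (order H) \<longrightarrow> good c H"
    and K: "group K" "finite (carrier K)" "order K < N" "primes_ge q (order K)"
  shows "good c K"
proof -
  obtain H :: "nat monoid" where H: "group H" "finite (carrier H)" "order H = order K" "psi H = psi K"
    "cyclic_group H \<longleftrightarrow> cyclic_group K"
    using transport_nat[OF K(1,2)] by blast
  have "good c H" using IH H K by simp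
  thus ?thesis using H unfolding good_def by simp
qed


lemma real_frac_bound:
  fixes psi F u v :: nat and c :: real
  assumes h: "v * psi \<le> u * F" and v: "v > 0" and c: "real u / real v \<le> c"
  shows "real psi \<le> c * real F"
proof -
  have "real v * real psi \<le> real u * real F" using h by (metis of_nat_le_iff of_nat_mult)
  hence "real psi \<le> (real u / real v) * real F" using v by (simp add: field_simps)
  also have "\<dots> \<le> c * real F" using c by (intro mult_right_mono) auto
  finally show ?thesis .
qed

lemma num_B:
  fixes p q psi F :: nat
  assumes p5: "p \<ge> 5" and q3: "q \<ge> 3" and h: "q * p * psi \<le> (p+1) * F"
  shows "5 * psi \<le> 2 * F"
proof -
  have "5 * (p + 1) \<le> 2 * (q * p)"
  proof -
    have "3 * p \<le> q * p" using q3 by simp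
    moreover obtain x where "x = q * p" by simp
    ultimately have "3 * p \<le> x" by simp
    hence "5 * (p + 1) \<le> 2 * x" using p5 by arith
    thus ?thesis using \<open>x = q * p\<close> by simp
  qed
  hence h2: "5 * ((p+1) * F) \<le> 2 * (q * p) * F" by (metis mult.assoc mult_le_mono1)
  have "(q * p) * (5 * psi) = 5 * (q * p * psi)" by (simp add: algebra_simps)
  also have "\<dots> \<le> 5 * ((p+1) * F)" using h by simp
  also have "\<dots> \<le> 2 * (q * p) * F" by (rule h2)
  also have "\<dots> = (q * p) * (2 * F)" by (simp add: algebra_simps)
  finally have "(q * p) * (5 * psi) \<le> (q * p) * (2 * F)" .
  moreover have "q * p > 0" using p5 q3 by simp
  ultimately show ?thesis by simp
qed

lemma num_A2:
  fixes p psi F M :: nat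
  assumes p5: "p \<ge> 5" and h: "7 * (p * p) * psi \<le> (p * p + 7 * (p + 1)) * (F * M)"
  shows "5 * psi \<le> 2 * (F * M)"
proof -
  have pp: "p * p \<ge> 5 * p" using p5 by simp
  obtain x where x: "x = p * p" by simp
  have "5 * (x + 7 * (p + 1)) \<le> 14 * x" using pp p5 x by arith
  hence "5 * (p * p + 7 * (p + 1)) \<le> 14 * (p * p)" using x by simp
  hence h2: "5 * ((p * p + 7 * (p + 1)) * (F * M)) \<le> 14 * (p * p) * (F * M)"
    by (metis mult.assoc mult_le_mono1)
  have "(7 * (p * p)) * (5 * psi) = 5 * (7 * (p * p) * psi)" by (simp add: algebra_simps)
  also have "\<dots> \<le> 5 * ((p * p + 7 * (p + 1)) * (F * M))" using h by (rule mult_le_mono2)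
  also have "\<dots> \<le> 14 * (p * p) * (F * M)" by (rule h2)
  also have "\<dots> = (7 * (p * p)) * (2 * (F * M))" by (simp add: algebra_simps)
  finally have "(7 * (p * p)) * (5 * psi) \<le> (7 * (p * p)) * (2 * (F * M))" .
  moreover have "7 * (p * p) > 0" using p5 by simp
  ultimately show ?thesis by simp
qed


context group begin

lemma step:
  assumes fin: "finite (carrier G)" and pq: "primes_ge q (order G)" and q3: "3 \<le> q"
    and c1: "2/5 \<le> c" and c2: "c \<le> 1" and c3: "q < 5 \<Longrightarrow> 11/25 \<le> c"
    and IH: "\<forall>H::nat monoid. group H \<and> finite (carrier H) \<and> order H < order G \<and> primes_ge q (order H) \<longrightarrow> good c H"
  shows "good c G"
proof (cases "cyclic_group G")
  case True
  thus ?thesis using psi_cyclic[OF fin True] unfolding good_def by simp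
next
  case nc: False
  define n where "n = order G"
  have n0: "n > 0" unfolding n_def using fin order_gt_0_iff_finite by blast
  have IHany: "good c K" if "group K" "finite (carrier K)" "order K < n" "primes_ge q (order K)"
    for K :: "('c, 'd) monoid_scheme"
    using good_of_IH[OF IH that(1,2) _ that(4)] that(3) unfolding n_def by simp
  have n1: "n \<noteq> 1"
  proof
    assume "n = 1"
    hence "ord \<one> = order G" unfolding n_def by simp
    thus False using nc cyclic_iff_ord[OF fin] by blast
  qed
  define S where "S = {r. prime r \<and> r dvd n}"
  have finS: "finite S" unfolding S_def
    by (rule finite_subset[of _ "{..n}"]) (use n0 in \<open>auto dest: dvd_imp_le\<close>)
  obtain r0 where "prime r0" "r0 dvd n" using n1 prime_factor_nat by blast
  hence neS: "S \<noteq> {}" unfolding S_def by blast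
  define p where "p = Max S"
  have "p \<in> S" unfolding p_def using finS neS by (rule Max_in)
  hence p: "prime p" "p dvd n" unfolding S_def by auto
  have pmax: "s \<le> p" if "prime s" "s dvd n" for s
    unfolding p_def using finS that by (intro Max_ge) (auto simp: S_def)
  have pq': "q \<le> p" using pq p unfolding primes_ge_def n_def by blast
  define a where "a = multiplicity p n"
  define m where "m = n div p^a"
  have nm: "n = p^a * m" "\<not> p dvd m"
    using multiplicity_dvd[of p n] multiplicity_decompose[of n p] n0 p prime_gt_1_nat[OF p(1)]
    unfolding a_def m_def by simp_all
  have m0: "m > 0" using nm n0 by (cases "m = 0") auto
  have "p \<noteq> 1" using p by auto
  hence a1: "a \<ge> 1" unfolding a_def using p n0
    by (simp add: multiplicity_gt_zero_iff Suc_le_eq)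
  have p1: "p > 1" using prime_gt_1_nat[OF p(1)] .
  have pa1: "p^a > 1" using power_increasing[OF a1, of p] p1 by simp
  have mn: "m < n" using nm(1) pa1 m0 by simp
  have copm: "coprime (p^a) m" using nm(2) p by (simp add: coprime_power_left_iff prime_imp_coprime)
  have pqm: "primes_ge q m" using primes_ge_dvd[OF pq] nm(1) unfolding n_def by simp
  have key: "real (psi G) \<le> c * real (fsum n)"
  proof (cases "p = 3")
    case True
    have q3': "q = 3" using pq' q3 True by simp
    have "m = 1"
    proof (rule ccontr)
      assume "m \<noteq> 1"
      then obtain r where r: "prime r" "r dvd m" using prime_factor_nat by blast
      hence "r dvd n" using nm(1) by simp
      hence rle: "r \<le> 3" using pmax[OF r(1)] True by simp
      have "q \<le> r" using pq r(1) \<open>r dvd n\<close> unfolding primes_ge_def n_def by blast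
      hence "r = 3" using rle q3' by simp
      thus False using r nm(2) True by simp
    qed
    hence "order G = 3^a" using nm(1) True unfolding n_def by simp
    hence "25 * psi G \<le> 11 * fsum n" using three_group_bound[OF fin _ nc] unfolding n_def by simp
    moreover have "real 11 / real 25 \<le> c" using c3 q3' by simp
    ultimately show ?thesis using real_frac_bound[of 25 "psi G" 11 "fsum n" c] by simp
  next
    case False
    have p5: "p \<ge> 5"
    proof -
      have "p \<ge> 3" using pq' q3 by simp
      moreover have "odd p" using prime_odd_nat[OF p(1)] \<open>p \<ge> 3\<close> by simp
      hence "p \<noteq> 4" by auto
      ultimately show ?thesis using False by linarith
    qed
    have nG: "order G = p^a * m" using nm(1) n_def by simp
    show ?thesis
    proof (cases "\<exists>y\<in>carrier G. ord y = p^a \<and> (\<forall>g\<in>carrier G. g \<otimes> y \<otimes> inv g \<in> generate G {y})")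
      case True
      then obtain y where y: "y \<in> carrier G" "ord y = p^a"
        and conj: "\<forall>g\<in>carrier G. g \<otimes> y \<otimes> inv g \<in> generate G {y}" by blast
      let ?P = "generate G {y}"
      have nP: "?P \<lhd> G" by (rule conj_closed_normal[OF fin y(1) conj])
      interpret N: normal ?P G by (rule nP)
      have Qg: "group (G Mod ?P)" by (rule N.Q_group)
      have cardP: "card ?P = p^a" using card_gen[OF y(1)] y(2) by simp
      have "order (G Mod ?P) * p^a = m * p^a" using N.order_Q[OF fin] nG cardP by (simp add: mult.commute)
      hence oQ: "order (G Mod ?P) = m" using pa1 p1 by auto
      have finQ: "finite (carrier (G Mod ?P))" using oQ m0 unfolding order_def using card_ge_0_finite by blast
      have IHQ: "good c (G Mod ?P)" by (rule IHany[OF Qg finQ]) (use oQ mn pqm in simp_all)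
      have fn: "fsum n = fsum (p^a) * fsum m" using nm(1) fsum_mult[OF copm _ m0] pa1 p1 by simp
      show ?thesis
      proof (cases "\<forall>g\<in>carrier G. g \<otimes> y = y \<otimes> g")
        case cen: True
        note cc = central_case[OF fin p(1) nG nm(2) y cen nP]
        have ncQ: "\<not> cyclic_group (G Mod ?P)" using cc(2) nc by blast
        have "real (psi (G Mod ?P)) \<le> c * real (fsum m)" using IHQ ncQ oQ unfolding good_def by simp
        hence "real (fsum (p^a)) * real (psi (G Mod ?P)) \<le> real (fsum (p^a)) * (c * real (fsum m))"
          by (intro mult_left_mono) auto
        thus ?thesis using cc(1) fn by (simp add: algebra_simps)
      next
        case False
        then obtain g0 where g0: "g0 \<in> carrier G" "g0 \<otimes> y \<noteq> y \<otimes> g0" by blast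
        define C where "C = {g \<in> carrier G. g \<otimes> y = y \<otimes> g}"
        have main: "p * psi G \<le> p * psi (G\<lparr>carrier := C\<rparr>) + p^a * p^a * psi (G Mod ?P)"
          unfolding C_def by (rule noncentral_case[OF fin p(1) nG nm(2) y nP])
        have Csub: "subgroup C G" unfolding C_def by (rule centralizer_subgroup[OF y(1)])
        have CG: "C \<subseteq> carrier G" unfolding C_def by auto
        have CneG: "C \<noteq> carrier G" using g0 unfolding C_def by auto
        have cardC: "card C < n" unfolding n_def order_def using CG CneG fin by (simp add: psubset_card_mono psubsetI)
        have Cg: "group (G\<lparr>carrier := C\<rparr>)" by (rule subgroup.subgroup_is_group[OF Csub is_group])
        have finC: "finite C" using fin CG finite_subset by blast
        have PC: "?P \<subseteq> C"
        proof
          fix w assume w: "w \<in> ?P"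
          have "y \<otimes> w = w \<otimes> y" using gen_commute[OF fin y(1) w y(1)] by simp
          thus "w \<in> C" unfolding C_def using w gen_subset[OF y(1)] by auto
        qed
        have PsubC: "subgroup ?P (G\<lparr>carrier := C\<rparr>)"
          by (rule group.subgroup_incl[OF is_group N.subgroup_axioms Csub PC])
        have "card (rcosets\<^bsub>G\<lparr>carrier := C\<rparr>\<^esub> ?P) * card ?P = order (G\<lparr>carrier := C\<rparr>)"
          by (rule group.lagrange[OF Cg PsubC])
        hence "card (rcosets\<^bsub>G\<lparr>carrier := C\<rparr>\<^esub> ?P) * p^a = card C" using cardP unfolding order_def by simp
        hence paC: "p^a dvd card C" using dvd_triv_right[of "p^a" "card (rcosets\<^bsub>G\<lparr>carrier := C\<rparr>\<^esub> ?P)"] by simp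
        define c' where "c' = card C div p^a"
        have Cc: "card C = p^a * c'" using paC c'_def by simp
        define k where "k = card (rcosets C)"
        have kC: "k * card C = n" using lagrange[OF Csub] unfolding k_def n_def .
        have "p^a * (c' * k) = p^a * m" using kC Cc nm(1) by (simp add: algebra_simps)
        hence ckm: "c' * k = m" using pa1 p1 by auto
        have c'0: "c' > 0" using ckm m0 by (cases "c' = 0") auto
        have k1: "k \<noteq> 1" using kC cardC by auto
        obtain r where r: "prime r" "r dvd k" using k1 prime_factor_nat by blast
        have rm: "r dvd m" using ckm r(2) dvd_mult[of r k c'] by simp
        have rn: "r dvd n" using rm nm(1) by simp
        have rq: "q \<le> r" using pq r(1) rn unfolding primes_ge_def n_def by blast
        have R7: "7 \<le> r*r - r + 1"
        proof -
          have "3 * r \<le> r * r" using rq q3 by simp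
          thus ?thesis using rq q3 by arith
        qed
        have "coprime (p^a) (c' * k)" using copm ckm by simp
        hence copc: "coprime (p^a) c'" by simp
        have fC: "fsum (card C) = fsum (p^a) * fsum c'"
          unfolding Cc by (rule fsum_mult[OF copc]) (use p1 c'0 in simp_all)
        have st: "(r*r - r + 1) * fsum c' \<le> fsum (c' * r)" by (rule fsum_prime_step[OF r(1) c'0])
        have "c' * r dvd c' * k" using r(2) by (rule mult_dvd_mono[OF dvd_refl])
        hence "c' * r dvd m" using ckm by simp
        hence mono: "fsum (c' * r) \<le> fsum m" using m0 by (rule fsum_mono_dvd)
        have X7: "7 * fsum c' \<le> fsum m"
        proof -
          have "7 * fsum c' \<le> (r*r - r + 1) * fsum c'" using R7 by (rule mult_le_mono1)
          thus ?thesis using st mono by linarith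
        qed
        have "card C dvd n" using kC dvd_triv_right[of "card C" k] by simp
        hence pgC: "primes_ge q (card C)" using primes_ge_dvd[OF pq] unfolding n_def by simp
        have IHC: "good c (G\<lparr>carrier := C\<rparr>)"
          by (rule IHany[OF Cg]) (use finC cardC pgC in \<open>simp_all add: order_def\<close>)
        hence IHC1: "psi (G\<lparr>carrier := C\<rparr>) \<le> fsum (p^a) * fsum c'"
          unfolding good_def order_def using fC by simp
        have IHQ1: "psi (G Mod ?P) \<le> fsum m" using IHQ oQ unfolding good_def by simp
        define F where "F = fsum (p^a)"
        define X where "X = fsum c'"
        define M where "M = fsum m"
        define B where "B = p^a * p^a"
        have ppF: "p * B \<le> (p+1) * F"
        proof -
          have e: "p^(2*a+1) = p * B" unfolding B_def by (simp add: mult_2 power_add)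
          have "(p+1) * F = p^(2*a+1) + 1" unfolding F_def by (rule fsum_prime_power[OF p(1)])
          hence "(p+1) * F = p * B + 1" unfolding e .
          thus ?thesis by linarith
        qed
        have s1: "p * psi G \<le> p * (F * X) + B * M"
        proof -
          have "p * psi (G\<lparr>carrier := C\<rparr>) \<le> p * (F * X)" using IHC1 unfolding F_def X_def by simp
          moreover have "p^a * p^a * psi (G Mod ?P) \<le> B * M" using IHQ1 unfolding B_def M_def by simp
          ultimately show ?thesis using main by linarith
        qed
        have "7 * (p * p) * psi G = 7 * p * (p * psi G)" by (simp add: algebra_simps)
        also have "\<dots> \<le> 7 * p * (p * (F * X) + B * M)" using s1 by (rule mult_le_mono2)
        also have "\<dots> = p * p * F * (7 * X) + 7 * (p * B) * M" by (simp add: algebra_simps)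
        also have "\<dots> \<le> p * p * F * M + 7 * ((p+1) * F) * M"
        proof (rule add_le_mono)
          show "p * p * F * (7 * X) \<le> p * p * F * M" using X7 unfolding X_def M_def by (rule mult_le_mono2)
          show "7 * (p * B) * M \<le> 7 * ((p+1) * F) * M" using ppF by simp
        qed
        also have "\<dots> = (p * p + 7 * (p + 1)) * (F * M)" by (simp add: algebra_simps)
        finally have "5 * psi G \<le> 2 * (F * M)" by (rule num_A2[OF p5])
        moreover have "F * M = fsum n" using fn unfolding F_def M_def by simp
        ultimately show ?thesis using real_frac_bound[of 5 "psi G" 2 "fsum n" c] c1 by simp
      qed
    next
      case noA: False
      have bnd: "ord x * p \<le> n" if x: "x \<in> carrier G" for x
      proof (rule ccontr)
        assume ass: "\<not> ord x * p \<le> n"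
        define k where "k = n div ord x"
        have "ord x dvd n" using ord_dvd_group_order[OF x] unfolding n_def .
        hence ok: "ord x * k = order G" unfolding k_def n_def by simp
        have "ord x * k < ord x * p" using ok ass unfolding n_def by simp
        hence "k < p" by simp
        from caseB_index[OF fin p(1) nG nm(2) x ok this] noA show False by blast
      qed
      have "p * psi G = (\<Sum>x\<in>carrier G. ord x * p)" unfolding psi_def sum_distrib_right[symmetric] by simp
      also have "\<dots> \<le> (\<Sum>x\<in>carrier G. n)" by (rule sum_mono) (rule bnd)
      also have "\<dots> = n * n" unfolding n_def order_def by simp
      finally have s: "p * psi G \<le> n * n" .
      have fl: "q * n^2 \<le> (p+1) * fsum n"
      proof (rule fsum_lower[OF n0])
        show "\<forall>r. prime r \<and> r dvd n \<longrightarrow> q \<le> r \<and> r \<le> p"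
          using pq pmax unfolding primes_ge_def n_def by blast
        show "q \<le> p + 1" using pq' by simp
      qed
      have "q * p * psi G \<le> (p+1) * fsum n"
      proof -
        have "q * p * psi G = q * (p * psi G)" by (simp add: algebra_simps)
        also have "\<dots> \<le> q * (n * n)" using s by (rule mult_le_mono2)
        also have "\<dots> = q * n^2" by (simp add: power2_eq_square)
        finally show ?thesis using fl by linarith
      qed
      hence "5 * psi G \<le> 2 * fsum n" by (rule num_B[OF p5 q3])
      thus ?thesis using real_frac_bound[of 5 "psi G" 2 "fsum n" c] c1 by simp
    qed
  qed
  have "c * real (fsum n) \<le> 1 * real (fsum n)" using c2 by (intro mult_right_mono) auto
  hence "real (psi G) \<le> real (fsum n)" using key by simp
  thus ?thesis using key nc unfolding good_def n_def by simp
qed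

end


lemma main_nat:
  assumes q3: "3 \<le> q" and c1: "2/5 \<le> c" and c2: "c \<le> 1" and c3: "q < 5 \<Longrightarrow> 11/25 \<le> c"
  shows "\<forall>H::nat monoid. group H \<and> finite (carrier H) \<and> order H = N \<and> primes_ge q (order H) \<longrightarrow> good c H"
proof (induction N rule: less_induct)
  case (less N)
  show ?case
  proof (intro allI impI)
    fix H :: "nat monoid"
    assume H: "group H \<and> finite (carrier H) \<and> order H = N \<and> primes_ge q (order H)"
    have IH: "\<forall>H'::nat monoid. group H' \<and> finite (carrier H') \<and> order H' < order H \<and> primes_ge q (order H') \<longrightarrow> good c H'"
      using less.IH H by blast
    show "good c H" using group.step[OF _ _ _ q3 c1 c2 c3 IH] H by blast
  qed
qed

lemma main_any:
  assumes G: "group G" "finite (carrier G)" "primes_ge q (order G)"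
    and q3: "3 \<le> q" and c1: "2/5 \<le> c" and c2: "c \<le> 1" and c3: "q < 5 \<Longrightarrow> 11/25 \<le> c"
  shows "good c G"
proof -
  have IH: "\<forall>H::nat monoid. group H \<and> finite (carrier H) \<and> order H < order G \<and> primes_ge q (order H) \<longrightarrow> good c H"
    using main_nat[OF q3 c1 c2 c3] by blast
  show ?thesis using group.step[OF G(1) G(2) G(3) q3 c1 c2 c3 IH] .
qed

theorem lemma3p1:
  fixes G :: "('a, 'b) monoid_scheme"
  assumes "group G" and "finite (carrier G)" and "\<not> cyclic_group G"
  shows "(psi' G \<ge> 19 / 43 \<longrightarrow> 2 dvd order G)
       \<and> (psi' G > 31 / 77 \<longrightarrow> 2 dvd order G \<or> 3 dvd order G)"
proof -
  define n where "n = order G"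
  have n0: "n > 0" unfolding n_def using assms(2) monoid.order_gt_0_iff_finite[OF group.is_monoid[OF assms(1)]] by blast
  have F0: "fsum n > 0" using fsum_pos[OF n0] .
  have psi': "psi' G = real (psi G) / real (fsum n)"
    unfolding psi'_def n_def using psi_integer_mod_group n0 n_def by simp
  have bound: "psi' G \<le> c" if "good c G" for c
  proof -
    have "real (psi G) \<le> c * real (fsum n)" using that assms(3) unfolding good_def n_def by simp
    thus ?thesis unfolding psi' using F0 by (simp add: divide_le_eq)
  qed
  have i: "\<not> 2 dvd n \<longrightarrow> psi' G \<le> 11/25"
  proof
    assume n2: "\<not> 2 dvd n"
    have "primes_ge 3 n" unfolding primes_ge_def
    proof (intro allI impI)
      fix r assume r: "prime r \<and> r dvd (n::nat)"
      hence "r \<noteq> 2" using n2 by auto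
      moreover have "r \<ge> 2" using r prime_ge_2_nat by blast
      ultimately show "3 \<le> r" by simp
    qed
    hence "good (11/25) G" using main_any[OF assms(1,2)] unfolding n_def by simp
    thus "psi' G \<le> 11/25" by (rule bound)
  qed
  have ii: "\<not> 2 dvd n \<and> \<not> 3 dvd n \<longrightarrow> psi' G \<le> 2/5"
  proof
    assume n23: "\<not> 2 dvd n \<and> \<not> 3 dvd n"
    have "primes_ge 5 n" unfolding primes_ge_def
    proof (intro allI impI)
      fix r assume r: "prime r \<and> r dvd (n::nat)"
      hence "r \<noteq> 2" "r \<noteq> 3" using n23 by auto
      moreover have "\<not> 2 dvd r" using r n23 dvd_trans by blast
      hence "r \<noteq> 4" by auto
      moreover have "r \<ge> 2" using r prime_ge_2_nat by blast
      ultimately show "5 \<le> r" by simp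
    qed
    hence "good (2/5) G" using main_any[OF assms(1,2)] unfolding n_def by simp
    thus "psi' G \<le> 2/5" by (rule bound)
  qed
  show ?thesis using i ii unfolding n_def by auto
qed

end
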